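(* Let $f\in\mathcal A$ and suppose that $f$ does not have zero sums at $e$, i.e. there is $\mathbf n\in\mathbf L$ with $\sum_{l=0}^\infty f(s_{\mathbf n_l}s_{\mathbf n_l}^* )\neq0$. Then there exist $g,h\in\mathcal A$ with $g\#f\#h=\delta_e$.
   Context: Let $\mathrm{Cu}_2$ be the involutive monoid with identity $e$ and zero element $\lozenge$ (so $\lozenge t=\lozenge=t\lozenge$ for all $t$), generated by $s_1,s_2,s_1^*,s_2^*$ subject to $s_1^*s_1=e=s_2^*s_2$ and $s_1^*s_2=\lozenge=s_2^*s_1$, with involution $t\mapsto t^*$ satisfying $(t^* )^*=t$, $(tu)^*=u^*t^*$. Let $\mathbf I_0=\{\emptyset\}$, $\mathbf I_n=\{1,2\}^n$, $\mathbf I=\bigcup_{n\ge0}\mathbf I_n$ (finite words; concatenation written $\mathbf{ij}$), and $\mathbf L=\{1,2\}^{\mathbb N}$; for $\mathbf n=(n_1,n_2,\dots)\in\mathbf L$ put $\mathbf n_0=\emptyset$, $\mathbf n_l=(n_1,\dots,n_l)$. For $\mathbf i=(i_1,\dots,i_k)\in\mathbf I$ put $s_{\mathbf i}=s_{i_1}\cdots s_{i_k}$ ($s_\emptyset=e$) and $s_{\mathbf i}^*=(s_{\mathbf i})^*$. Every $t\in\mathrm{Cu}_2\setminus\{\lozenge\}$ can be written uniquely as $t=s_{\mathbf i}s_{\mathbf j}^*$ with $\mathbf i,\mathbf j\in\mathbf I$. Let $\mathcal A=\ell^1(\mathrm{Cu}_2\setminus\{\lozenge\})$ with product $\#$ determined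 by bilinearity and continuity from $\delta_s\#\delta_t=\delta_{st}$ if $st\neq\lozenge$ and $\delta_s\#\delta_t=0$ if $st=\lozenge$; this is a unital Banach $*$-algebra with unit $\delta_e$ and isometric involution $f^*(s)=\overline{f(s^* )}$. *)

theory Defs
  imports "HOL-Analysis.Analysis"
begin

datatype gen = G1 | G2

type_synonym word = "gen list"

text \<open>A nonzero element of Cu_2 is represented by its unique normal form
  s_i s_j^* , i.e. by the pair (i, j) of finite words.\<close>
type_synonym cu2 = "word \<times> word"

definition cu2_e :: cu2 where "cu2_e = ([], [])"

text \<open>Multiplication in Cu_2; None stands for the zero element.
  (s_i s_j^*)(s_k s_l^*) = s_i s_k' s_l^* if k = j k';
                         = s_i (s_l s_j')^* if j = k j';
                         = zero otherwise.\<close>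
definition cu2_mult :: "cu2 \<Rightarrow> cu2 \<Rightarrow> cu2 option" where
  "cu2_mult a b =
     (case a of (i, j) \<Rightarrow> case b of (k, l) \<Rightarrow>
        if (\<exists>k'. k = j @ k') then Some (i @ drop (length j) k, l)
        else if (\<exists>j'. j = k @ j') then Some (i, l @ drop (length k) j)
        else None)"

text \<open>Elements of the Banach algebra ell^1(Cu_2 minus zero).\<close>
definition in_A :: "(cu2 \<Rightarrow> complex) \<Rightarrow> bool" where
  "in_A f \<longleftrightarrow> (\<lambda>t. norm (f t)) summable_on UNIV"

definition conv :: "(cu2 \<Rightarrow> complex) \<Rightarrow> (cu2 \<Rightarrow> complex) \<Rightarrow> cu2 \<Rightarrow> complex"
  (infixl "#\<^sub>C" 70) where
  "conv f g t = (\<Sum>\<^sub>\<infinity>(s, u) \<in> UNIV. if cu2_mult s u = Some t then f s * g u else 0)"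

definition delta :: "cu2 \<Rightarrow> cu2 \<Rightarrow> complex" where
  "delta s = (\<lambda>t. if t = s then 1 else 0)"

text \<open>n_l = (n_1, ..., n_l) for an infinite word n (indexed from 0 here).\<close>
definition prefix_word :: "(nat \<Rightarrow> gen) \<Rightarrow> nat \<Rightarrow> word" where
  "prefix_word n l = map n [0..<l]"

end

theory Submission
  imports Defs
begin
definition push :: "('a \<Rightarrow> 'b option) \<Rightarrow> ('a \<Rightarrow> complex) \<Rightarrow> 'b \<Rightarrow> complex" where
  "push \<phi> F t = (\<Sum>\<^sub>\<infinity>s\<in>UNIV. if \<phi> s = Some t then F s else 0)"

definition nrm :: "('a \<Rightarrow> complex) \<Rightarrow> real" where
  "nrm F = (\<Sum>\<^sub>\<infinity>s\<in>UNIV. norm (F s))"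

lemma infsum_single_UNIV:
  assumes "\<And>p. p \<noteq> a \<Longrightarrow> h p = (0::'b::{comm_monoid_add,t2_space})"
  shows "infsum h UNIV = h a"
proof -
  have "infsum h UNIV = infsum h {a}"
    by (rule infsum_cong_neutral) (use assms in auto)
  then show ?thesis by simp
qed

lemma G_has_sum:
  "((\<lambda>(t,s). if \<phi> s = Some t then F s else 0) has_sum X) UNIV
   \<longleftrightarrow> (F has_sum X) {s. \<phi> s \<noteq> None}"
proof -
  let ?G = "(\<lambda>(t,s). if \<phi> s = Some t then F s else 0)"
  let ?h = "\<lambda>s. (the (\<phi> s), s)"
  have "(?G has_sum X) UNIV \<longleftrightarrow> (?G has_sum X) (?h ` {s. \<phi> s \<noteq> None})"
  proof (rule has_sum_cong_neutral)
    fix x assume x: "x \<in> UNIV - ?h ` {s. \<phi> s \<noteq> None}"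
    obtain t s where xts: "x = (t,s)" by (cases x)
    show "?G x = 0"
    proof (cases "\<phi> s = Some t")
      case True
      then have "x \<in> ?h ` {s. \<phi> s \<noteq> None}" using xts by (auto intro!: image_eqI[of _ _ s])
      then show ?thesis using x by blast
    qed (simp add: xts)
  qed auto
  also have "\<dots> \<longleftrightarrow> ((?G \<circ> ?h) has_sum X) {s. \<phi> s \<noteq> None}"
    by (rule has_sum_reindex) (auto simp: inj_on_def)
  also have "\<dots> \<longleftrightarrow> (F has_sum X) {s. \<phi> s \<noteq> None}"
    by (rule has_sum_cong) auto
  finally show ?thesis .
qed

lemma G_summable_real:
  fixes F :: "'a \<Rightarrow> real"
  assumes "F summable_on UNIV"
  shows "(\<lambda>(t,s). if \<phi> s = Some t then F s else 0) summable_on UNIV"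
proof -
  have "F summable_on {s. \<phi> s \<noteq> None}"
    by (rule summable_on_subset_banach[OF assms]) simp
  then obtain X where "(F has_sum X) {s. \<phi> s \<noteq> None}"
    unfolding summable_on_def by blast
  then have "((\<lambda>(t,s). if \<phi> s = Some t then F s else 0) has_sum X) UNIV"
    by (rule G_has_sum[THEN iffD2])
  then show ?thesis unfolding summable_on_def by blast
qed

lemma G_infsum_real:
  fixes F :: "'a \<Rightarrow> real"
  assumes "F summable_on UNIV"
  shows "infsum (\<lambda>(t,s). if \<phi> s = Some t then F s else 0) UNIV = infsum F {s. \<phi> s \<noteq> None}"
proof -
  have "F summable_on {s. \<phi> s \<noteq> None}"
    by (rule summable_on_subset_banach[OF assms]) simp
  then have "(F has_sum infsum F {s. \<phi> s \<noteq> None}) {s. \<phi> s \<noteq> None}"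
    by simp
  then have "((\<lambda>(t,s). if \<phi> s = Some t then F s else 0) has_sum infsum F {s. \<phi> s \<noteq> None}) UNIV"
    by (rule G_has_sum[THEN iffD2])
  then show ?thesis by (rule infsumI)
qed

lemma G_summable:
  fixes F :: "'a \<Rightarrow> complex"
  assumes "F summable_on UNIV"
  shows "(\<lambda>(t,s). if \<phi> s = Some t then F s else 0) summable_on UNIV"
proof -
  have "F summable_on {s. \<phi> s \<noteq> None}"
    by (rule summable_on_subset_banach[OF assms]) simp
  then obtain X where "(F has_sum X) {s. \<phi> s \<noteq> None}"
    unfolding summable_on_def by blast
  then have "((\<lambda>(t,s). if \<phi> s = Some t then F s else 0) has_sum X) UNIV"
    by (rule G_has_sum[THEN iffD2])
  then show ?thesis unfolding summable_on_def by blast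
qed

lemma G_infsum:
  fixes F :: "'a \<Rightarrow> complex"
  assumes "F summable_on UNIV"
  shows "infsum (\<lambda>(t,s). if \<phi> s = Some t then F s else 0) UNIV = infsum F {s. \<phi> s \<noteq> None}"
proof -
  have "F summable_on {s. \<phi> s \<noteq> None}"
    by (rule summable_on_subset_banach[OF assms]) simp
  then have "(F has_sum infsum F {s. \<phi> s \<noteq> None}) {s. \<phi> s \<noteq> None}"
    by simp
  then have "((\<lambda>(t,s). if \<phi> s = Some t then F s else 0) has_sum infsum F {s. \<phi> s \<noteq> None}) UNIV"
    by (rule G_has_sum[THEN iffD2])
  then show ?thesis by (rule infsumI)
qed

lemma summable_norm_iff: "(F::'a\<Rightarrow>complex) summable_on A \<longleftrightarrow> (\<lambda>x. norm (F x)) summable_on A"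
  by (rule summable_on_iff_abs_summable_on_complex)

lemma push_summable:
  assumes "F summable_on UNIV"
  shows "push \<phi> F summable_on UNIV" "nrm (push \<phi> F) \<le> nrm F"
proof -
  let ?G = "\<lambda>t s. if \<phi> s = Some t then F s else 0"
  let ?N = "\<lambda>t s. if \<phi> s = Some t then norm (F s) else 0"
  have G: "(\<lambda>(t,s). ?G t s) summable_on UNIV"
    using G_summable[OF assms, of \<phi>] by simp
  have nF: "(\<lambda>s. norm (F s)) summable_on UNIV" using summable_norm_iff[THEN iffD1, OF assms] .
  have N: "(\<lambda>(t,s). ?N t s) summable_on UNIV"
    using G_summable_real[OF nF, of \<phi>] by simp
  have "(\<lambda>t. infsum (?G t) UNIV) summable_on UNIV"
    using summable_on_Sigma_banach[of ?G UNIV "\<lambda>_. UNIV"] G by simp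
  then show "push \<phi> F summable_on UNIV" unfolding push_def[abs_def] by simp
  have Nt: "(\<lambda>t. infsum (?N t) UNIV) summable_on UNIV"
    using summable_on_Sigma_banach[of ?N UNIV "\<lambda>_. UNIV"] N by simp
  have fib: "?G t summable_on UNIV" for t
    using summable_on_SigmaD1[of ?G UNIV "\<lambda>_. UNIV" t] G by simp
  have "norm (push \<phi> F t) \<le> infsum (?N t) UNIV" for t
  proof -
    have "norm (push \<phi> F t) \<le> infsum (\<lambda>s. norm (?G t s)) UNIV"
      unfolding push_def by (rule norm_infsum_bound) (rule summable_on_iff_abs_summable_on_complex[THEN iffD1, OF fib])
    also have "\<dots> = infsum (?N t) UNIV" by (rule infsum_cong) auto
    finally show ?thesis .
  qed
  note bnd = this
  have "nrm (push \<phi> F) \<le> infsum (\<lambda>t. infsum (?N t) UNIV) UNIV"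
    unfolding nrm_def
  proof (rule infsum_mono)
    show "(\<lambda>t. infsum (?N t) UNIV) summable_on UNIV" by (rule Nt)
    show "(\<lambda>t. norm (push \<phi> F t)) summable_on UNIV"
      by (rule summable_on_iff_abs_summable_on_complex[THEN iffD1, OF \<open>push \<phi> F summable_on UNIV\<close>])
  qed (rule bnd)
  also have "\<dots> = infsum (\<lambda>(t,s). ?N t s) UNIV"
    using infsum_Sigma'_banach[of ?N UNIV "\<lambda>_. UNIV"] N by simp
  also have "\<dots> = infsum (\<lambda>s. norm (F s)) {s. \<phi> s \<noteq> None}"
    using G_infsum_real[OF nF, of \<phi>] by simp
  also have "\<dots> \<le> nrm F" unfolding nrm_def
  proof (rule infsum_mono_neutral)
    show "(\<lambda>s. norm (F s)) summable_on {s. \<phi> s \<noteq> None}"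
      by (rule summable_on_subset_banach[OF nF]) simp
  qed (use nF in auto)
  finally show "nrm (push \<phi> F) \<le> nrm F" .
qed

definition act :: "cu2 \<Rightarrow> word \<Rightarrow> word option" where
  "act a y = (case a of (i,j) \<Rightarrow> if (\<exists>z. y = j @ z) then Some (i @ drop (length j) y) else None)"

definition actO :: "cu2 option \<Rightarrow> word \<Rightarrow> word option" where
  "actO x y = (case x of None \<Rightarrow> None | Some a \<Rightarrow> act a y)"

lemma act_mult: "Option.bind (act b y) (act a) = actO (cu2_mult a b) y"
proof -
  obtain i j where a: "a = (i,j)" by (cases a)
  obtain k l where b: "b = (k,l)" by (cases b)
  show ?thesis
  proof (cases "\<exists>k'. k = j @ k'")
    case True
    then obtain k' where k': "k = j @ k'" by blast
    show ?thesis
      by (auto simp: a b k' act_def actO_def cu2_mult_def)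
  next
    case False
    note F = this
    show ?thesis
    proof (cases "\<exists>j'. j = k @ j'")
      case True
      then obtain j' where j': "j = k @ j'" by blast
      show ?thesis using F
        by (auto simp: a b j' act_def actO_def cu2_mult_def append_eq_append_conv2)
    next
      case False
      then show ?thesis using F
        by (auto simp: a b act_def actO_def cu2_mult_def append_eq_append_conv2)
    qed
  qed
qed

lemma actO_Some: "actO (Some a) = act a" by (rule ext) (simp add: actO_def)
lemma actO_None: "actO None = (\<lambda>_. None)" by (rule ext) (simp add: actO_def)

lemma actO_inj: "actO x = actO y \<Longrightarrow> x = y"
proof -
  assume eq: "actO x = actO y"
  have nz: "actO (Some a) (snd a) \<noteq> None" for a
    by (cases a) (auto simp: actO_def act_def)
  show "x = y"
  proof (cases x)
    case None
    note xN = this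
    show ?thesis
    proof (cases y)
      case (Some b)
      have "actO (Some b) (snd b) = actO x (snd b)" using eq Some by simp
      then show ?thesis using nz[of b] xN by (simp add: actO_def)
    qed (simp add: xN)
  next
    case (Some a)
    note xa = this
    then show ?thesis
    proof (cases y)
      case None
      have "actO (Some a) (snd a) = actO y (snd a)" using eq xa by simp
      then show ?thesis using nz[of a] None by (simp add: actO_def)
    next
      case (Some b)
      obtain i j where a: "a = (i,j)" by (cases a)
      obtain k l where b: "b = (k,l)" by (cases b)
      have e: "act (i,j) w = act (k,l) w" for w using eq xa Some a b by (simp add: actO_Some)
      from e[of j] have "\<exists>z. j = l @ z" by (auto simp: act_def split: if_splits)
      moreover from e[of l] have "\<exists>z. l = j @ z" by (auto simp: act_def split: if_splits)
      ultimately have jl: "j = l" by auto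
      from e[of j] jl have "i = k" by (auto simp: act_def)
      then show ?thesis using xa Some a b jl by simp
    qed
  qed
qed

lemma cu2_assoc:
  "Option.bind (cu2_mult s u) (\<lambda>p. cu2_mult p v) = Option.bind (cu2_mult u v) (\<lambda>q. cu2_mult s q)"
proof (rule actO_inj, rule ext)
  fix y
  have L: "actO (Option.bind x (\<lambda>p. cu2_mult p v)) y = Option.bind (act v y) (actO x)" for x
    by (cases x) (simp_all add: actO_None actO_Some act_mult)
  have R: "actO (Option.bind x (\<lambda>q. cu2_mult s q)) y = Option.bind (actO x y) (act s)" for x
    by (cases x) (simp_all add: actO_None actO_Some act_mult)
  show "actO (Option.bind (cu2_mult s u) (\<lambda>p. cu2_mult p v)) y = actO (Option.bind (cu2_mult u v) (\<lambda>q. cu2_mult s q)) y"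
    unfolding L R by (cases "act v y") (simp_all add: act_mult[symmetric] actO_Some)
qed

lemma fib_summable:
  fixes F :: "'a \<Rightarrow> complex"
  assumes "F summable_on UNIV"
  shows "(\<lambda>s. if \<phi> s = Some t then F s else 0) summable_on UNIV"
proof -
  have "(\<lambda>s. norm (if \<phi> s = Some t then F s else 0)) summable_on UNIV"
    by (rule Infinite_Sum.abs_summable_on_comparison_test'[OF summable_norm_iff[THEN iffD1, OF assms]]) auto
  then show ?thesis using summable_norm_iff by (rule iffD2[rotated])
qed

lemma push_add:
  fixes F G :: "'a \<Rightarrow> complex"
  assumes "F summable_on UNIV" "G summable_on UNIV"
  shows "push \<phi> (\<lambda>s. F s + G s) t = push \<phi> F t + push \<phi> G t"
proof -
  have "push \<phi> (\<lambda>s. F s + G s) t = (\<Sum>\<^sub>\<infinity>s. (if \<phi> s = Some t then F s else 0) + (if \<phi> s = Some t then G s else 0))"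
    unfolding push_def by (rule infsum_cong) simp
  also have "\<dots> = push \<phi> F t + push \<phi> G t"
    unfolding push_def by (rule infsum_add) (rule fib_summable, fact)+
  finally show ?thesis .
qed

lemma push_cmult: "push \<phi> (\<lambda>s. c * F s) t = c * push \<phi> F t"
proof -
  have "push \<phi> (\<lambda>s. c * F s) t = (\<Sum>\<^sub>\<infinity>s. c * (if \<phi> s = Some t then F s else 0))"
    unfolding push_def by (rule infsum_cong) simp
  also have "\<dots> = c * push \<phi> F t"
    unfolding push_def by (rule infsum_cmult_right')
  finally show ?thesis .
qed

lemma push_comp:
  fixes F :: "'a \<Rightarrow> complex"
  assumes F: "F summable_on UNIV"
  shows "push \<psi> (push \<phi> F) t = push (\<lambda>s. Option.bind (\<phi> s) \<psi>) F t"
proof -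
  let ?H = "\<lambda>p s. if \<psi> p = Some t \<and> \<phi> s = Some p then F s else 0"
  have G: "(\<lambda>(p,s). if \<phi> s = Some p then F s else 0) summable_on UNIV"
    by (rule G_summable[OF F])
  have H: "(\<lambda>(p,s). ?H p s) summable_on UNIV"
  proof -
    have "(\<lambda>x. norm ((\<lambda>(p,s). ?H p s) x)) summable_on UNIV"
      by (rule Infinite_Sum.abs_summable_on_comparison_test'[OF summable_norm_iff[THEN iffD1, OF G]]) auto
    then show ?thesis using summable_norm_iff by (rule iffD2[rotated])
  qed
  have "push \<psi> (push \<phi> F) t = (\<Sum>\<^sub>\<infinity>p. \<Sum>\<^sub>\<infinity>s. ?H p s)"
    unfolding push_def by (rule infsum_cong) simp
  also have "\<dots> = (\<Sum>\<^sub>\<infinity>s. \<Sum>\<^sub>\<infinity>p. ?H p s)"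
    by (rule infsum_swap_banach) (use H in simp)
  also have "\<dots> = push (\<lambda>s. Option.bind (\<phi> s) \<psi>) F t"
    unfolding push_def
  proof (rule infsum_cong)
    fix s
    show "(\<Sum>\<^sub>\<infinity>p. ?H p s) = (if Option.bind (\<phi> s) \<psi> = Some t then F s else 0)"
    proof (cases "\<phi> s")
      case None
      then show ?thesis by simp
    next
      case (Some p0)
      have "(\<Sum>\<^sub>\<infinity>p. ?H p s) = ?H p0 s"
        by (rule infsum_single_UNIV) (simp add: Some)
      then show ?thesis by (simp add: Some)
    qed
  qed
  finally show ?thesis .
qed

lemma push_reindex:
  assumes "bij \<sigma>"
  shows "push (\<lambda>x. \<phi> (\<sigma> x)) (\<lambda>x. F (\<sigma> x)) t = push \<phi> F t"
  unfolding push_def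
  using infsum_reindex_bij_betw[of \<sigma> UNIV UNIV "\<lambda>y. if \<phi> y = Some t then F y else 0"] assms
  by simp

lemma push_cong:
  assumes "\<And>s. \<phi> s = \<psi> s"
  shows "push \<phi> F = push \<psi> F"
proof -
  have "\<phi> = \<psi>" using assms by (rule ext)
  then show ?thesis by simp
qed

lemma push_Some: "push Some F = F"
proof
  fix t
  show "push Some F t = F t"
    unfolding push_def by (subst infsum_single_UNIV[of t]) auto
qed

definition M2 :: "cu2 \<times> cu2 \<Rightarrow> cu2 option" where "M2 x = cu2_mult (fst x) (snd x)"

lemma conv_push: "conv f g = push M2 (\<lambda>x. f (fst x) * g (snd x))"
proof
  fix t
  show "conv f g t = push M2 (\<lambda>x. f (fst x) * g (snd x)) t"
    unfolding conv_def push_def M2_def by (rule infsum_cong) (simp add: case_prod_beta)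
qed

lemma tensor_summable:
  fixes f :: "'a \<Rightarrow> complex" and g :: "'b \<Rightarrow> complex"
  assumes f: "f summable_on UNIV" and g: "g summable_on UNIV"
  shows "(\<lambda>x. f (fst x) * g (snd x)) summable_on UNIV"
    "nrm (\<lambda>x. f (fst x) * g (snd x)) = nrm f * nrm g"
proof -
  have nf: "(\<lambda>s. norm (f s)) summable_on UNIV" using summable_norm_iff[THEN iffD1, OF f] .
  have ng: "(\<lambda>s. norm (g s)) summable_on UNIV" using summable_norm_iff[THEN iffD1, OF g] .
  have inner: "(\<Sum>\<^sub>\<infinity>u. norm (f s * g u)) = norm (f s) * nrm g" for s
    unfolding nrm_def norm_mult by (rule infsum_cmult_right')
  have "(\<lambda>x. norm (f (fst x) * g (snd x))) summable_on Sigma UNIV (\<lambda>_. UNIV)"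
    unfolding Infinite_Sum.abs_summable_on_Sigma_iff
  proof (intro conjI ballI)
    fix s
    show "(\<lambda>u. norm (f (fst (s,u)) * g (snd (s,u)))) summable_on UNIV"
      unfolding norm_mult fst_conv snd_conv by (rule summable_on_cmult_right[OF ng])
  next
    have "(\<lambda>s. norm (f s) * nrm g) summable_on UNIV" by (rule summable_on_cmult_left[OF nf])
    moreover have "norm (\<Sum>\<^sub>\<infinity>u. norm (f (fst (s,u)) * g (snd (s,u)))) = norm (f s) * nrm g" for s
      using inner[of s] by (simp add: nrm_def infsum_nonneg)
    ultimately show "(\<lambda>s. norm (\<Sum>\<^sub>\<infinity>u. norm (f (fst (s,u)) * g (snd (s,u))))) summable_on UNIV"
      by simp
  qed
  then have A: "(\<lambda>x. norm (f (fst x) * g (snd x))) summable_on UNIV" by simp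
  then show "(\<lambda>x. f (fst x) * g (snd x)) summable_on UNIV"
    using summable_norm_iff by (rule iffD2[rotated])
  have fe: "(\<lambda>(s,u). norm (f s * g u)) = (\<lambda>x. norm (f (fst x) * g (snd x)))"
    by (rule ext) (simp add: case_prod_beta)
  have A': "(\<lambda>(s,u). norm (f s * g u)) summable_on UNIV" unfolding fe by (rule A)
  have "nrm (\<lambda>x. f (fst x) * g (snd x)) = (\<Sum>\<^sub>\<infinity>(s,u). norm (f s * g u))"
    unfolding nrm_def by (rule infsum_cong) (simp add: case_prod_beta)
  also have "\<dots> = (\<Sum>\<^sub>\<infinity>s. \<Sum>\<^sub>\<infinity>u. norm (f s * g u))"
    using infsum_Sigma'_banach[of "\<lambda>s u. norm (f s * g u)" UNIV "\<lambda>_. UNIV"] A' by simp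
  also have "\<dots> = (\<Sum>\<^sub>\<infinity>s. norm (f s) * nrm g)" by (simp add: inner)
  also have "\<dots> = nrm f * nrm g" unfolding nrm_def by (rule infsum_cmult_left')
  finally show "nrm (\<lambda>x. f (fst x) * g (snd x)) = nrm f * nrm g" .
qed

lemma conv_summable:
  assumes "f summable_on UNIV" "g summable_on UNIV"
  shows "conv f g summable_on UNIV" "nrm (conv f g) \<le> nrm f * nrm g"
  unfolding conv_push
  using push_summable[OF tensor_summable(1)[OF assms]] tensor_summable(2)[OF assms] by auto

lemma conv_add_right:
  assumes "f summable_on UNIV" "g summable_on UNIV" "h summable_on UNIV"
  shows "conv f (\<lambda>t. g t + h t) t = conv f g t + conv f h t"
proof -
  have "conv f (\<lambda>t. g t + h t) t = push M2 (\<lambda>x. f (fst x) * g (snd x) + f (fst x) * h (snd x)) t"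
    unfolding conv_push by (simp add: distrib_left)
  also have "\<dots> = conv f g t + conv f h t"
    unfolding conv_push by (rule push_add) (rule tensor_summable(1), fact, fact)+
  finally show ?thesis .
qed

lemma conv_add_left:
  assumes "f summable_on UNIV" "g summable_on UNIV" "h summable_on UNIV"
  shows "conv (\<lambda>t. f t + g t) h t = conv f h t + conv g h t"
proof -
  have "conv (\<lambda>t. f t + g t) h t = push M2 (\<lambda>x. f (fst x) * h (snd x) + g (fst x) * h (snd x)) t"
    unfolding conv_push by (simp add: distrib_right)
  also have "\<dots> = conv f h t + conv g h t"
    unfolding conv_push by (rule push_add) (rule tensor_summable(1), fact, fact)+
  finally show ?thesis .
qed

lemma conv_cmult_right: "conv f (\<lambda>t. c * g t) t = c * conv f g t"
proof -
  have "conv f (\<lambda>t. c * g t) t = push M2 (\<lambda>x. c * (f (fst x) * g (snd x))) t"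
    unfolding conv_push by (simp add: ac_simps)
  also have "\<dots> = c * conv f g t" unfolding conv_push by (rule push_cmult)
  finally show ?thesis .
qed

lemma conv_delta_right: "conv f (delta b) = push (\<lambda>s. cu2_mult s b) f"
proof
  fix t
  have "conv f (delta b) t = (\<Sum>\<^sub>\<infinity>x\<in>range (\<lambda>s. (s,b)). if M2 x = Some t then f (fst x) * delta b (snd x) else 0)"
    unfolding conv_push push_def by (rule infsum_cong_neutral) (auto simp: delta_def)
  also have "\<dots> = (\<Sum>\<^sub>\<infinity>s. if M2 (s,b) = Some t then f s * delta b b else 0)"
    by (subst infsum_reindex) (simp_all add: inj_on_def o_def cong: if_cong)
  also have "\<dots> = push (\<lambda>s. cu2_mult s b) f t"
    unfolding push_def by (simp add: M2_def delta_def cong: if_cong)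
  finally show "conv f (delta b) t = push (\<lambda>s. cu2_mult s b) f t" .
qed

lemma conv_delta_left: "conv (delta a) g = push (\<lambda>u. cu2_mult a u) g"
proof
  fix t
  have "conv (delta a) g t = (\<Sum>\<^sub>\<infinity>x\<in>range (\<lambda>u. (a,u)). if M2 x = Some t then delta a (fst x) * g (snd x) else 0)"
    unfolding conv_push push_def by (rule infsum_cong_neutral) (auto simp: delta_def)
  also have "\<dots> = (\<Sum>\<^sub>\<infinity>u. if M2 (a,u) = Some t then delta a a * g u else 0)"
    by (subst infsum_reindex) (simp_all add: inj_on_def o_def cong: if_cong)
  also have "\<dots> = push (\<lambda>u. cu2_mult a u) g t"
    unfolding push_def by (simp add: M2_def delta_def cong: if_cong)
  finally show "conv (delta a) g t = push (\<lambda>u. cu2_mult a u) g t" .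
qed

lemma push_tensor_left:
  "push \<phi> F p * h v
   = push (\<lambda>y. map_option (\<lambda>p. (p, snd y)) (\<phi> (fst y))) (\<lambda>y. F (fst y) * h (snd y)) (p,v)"
proof -
  have "push (\<lambda>y. map_option (\<lambda>p. (p, snd y)) (\<phi> (fst y))) (\<lambda>y. F (fst y) * h (snd y)) (p,v)
     = (\<Sum>\<^sub>\<infinity>y\<in>range (\<lambda>s. (s,v)). if map_option (\<lambda>p. (p, snd y)) (\<phi> (fst y)) = Some (p,v) then F (fst y) * h (snd y) else 0)"
    unfolding push_def by (rule infsum_cong_neutral) auto
  also have "\<dots> = (\<Sum>\<^sub>\<infinity>s. if \<phi> s = Some p then F s * h v else 0)"
    by (subst infsum_reindex) (auto simp: inj_on_def o_def intro!: infsum_cong)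
  also have "\<dots> = (\<Sum>\<^sub>\<infinity>s. (if \<phi> s = Some p then F s else 0) * h v)"
    by (rule infsum_cong) simp
  also have "\<dots> = push \<phi> F p * h v" unfolding push_def by (rule infsum_cmult_left')
  finally show ?thesis by simp
qed

lemma push_tensor_right:
  "h v * push \<phi> F p
   = push (\<lambda>y. map_option (\<lambda>p. (fst y, p)) (\<phi> (snd y))) (\<lambda>y. h (fst y) * F (snd y)) (v,p)"
proof -
  have "push (\<lambda>y. map_option (\<lambda>p. (fst y, p)) (\<phi> (snd y))) (\<lambda>y. h (fst y) * F (snd y)) (v,p)
     = (\<Sum>\<^sub>\<infinity>y\<in>range (\<lambda>s. (v,s)). if map_option (\<lambda>p. (fst y, p)) (\<phi> (snd y)) = Some (v,p) then h (fst y) * F (snd y) else 0)"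
    unfolding push_def by (rule infsum_cong_neutral) auto
  also have "\<dots> = (\<Sum>\<^sub>\<infinity>s. if \<phi> s = Some p then h v * F s else 0)"
    by (subst infsum_reindex) (auto simp: inj_on_def o_def intro!: infsum_cong)
  also have "\<dots> = (\<Sum>\<^sub>\<infinity>s. h v * (if \<phi> s = Some p then F s else 0))"
    by (rule infsum_cong) simp
  also have "\<dots> = h v * push \<phi> F p" unfolding push_def by (rule infsum_cmult_right')
  finally show ?thesis by simp
qed

lemma bind_map_pair: "Option.bind (map_option (\<lambda>p. (p, v)) x) M2 = Option.bind x (\<lambda>p. cu2_mult p v)"
  by (cases x) (simp_all add: M2_def)

lemma bind_map_pair2: "Option.bind (map_option (\<lambda>q. (s, q)) x) M2 = Option.bind x (\<lambda>q. cu2_mult s q)"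
  by (cases x) (simp_all add: M2_def)

lemma conv_assoc:
  assumes f: "f summable_on UNIV" and g: "g summable_on UNIV" and h: "h summable_on UNIV"
  shows "conv (conv f g) h = conv f (conv g h)"
proof
  fix t
  let ?FG = "\<lambda>y. f (fst y) * g (snd y)"
  let ?GH = "\<lambda>y. g (fst y) * h (snd y)"
  let ?psiL = "\<lambda>z. map_option (\<lambda>p. (p, snd z)) (M2 (fst z))"
  let ?psiR = "\<lambda>z. map_option (\<lambda>q. (fst z, q)) (M2 (snd z))"
  let ?FGH = "\<lambda>z. ?FG (fst z) * h (snd z)"
  let ?FGH' = "\<lambda>z. f (fst z) * ?GH (snd z)"
  have FG: "?FG summable_on UNIV" by (rule tensor_summable(1)[OF f g])
  have GH: "?GH summable_on UNIV" by (rule tensor_summable(1)[OF g h])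
  have FGH: "?FGH summable_on UNIV" by (rule tensor_summable(1)[OF FG h])
  have FGH': "?FGH' summable_on UNIV" by (rule tensor_summable(1)[OF f GH])
  have eL: "(\<lambda>x. conv f g (fst x) * h (snd x)) = push ?psiL ?FGH"
  proof
    fix x :: "cu2 \<times> cu2"
    obtain p v where x: "x = (p,v)" by (cases x)
    show "conv f g (fst x) * h (snd x) = push ?psiL ?FGH x"
      unfolding x conv_push fst_conv snd_conv by (rule push_tensor_left)
  qed
  have eR: "(\<lambda>x. f (fst x) * conv g h (snd x)) = push ?psiR ?FGH'"
  proof
    fix x :: "cu2 \<times> cu2"
    obtain s q where x: "x = (s,q)" by (cases x)
    show "f (fst x) * conv g h (snd x) = push ?psiR ?FGH' x"
      unfolding x conv_push fst_conv snd_conv by (rule push_tensor_right)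
  qed
  have "conv (conv f g) h t = push (\<lambda>z. Option.bind (?psiL z) M2) ?FGH t"
    unfolding conv_push[of "conv f g"] eL by (rule push_comp[OF FGH])
  also have "\<dots> = push (\<lambda>z. Option.bind (?psiL ((\<lambda>(s,(u,v)). ((s,u),v)) z)) M2)
                        (\<lambda>z. ?FGH ((\<lambda>(s,(u,v)). ((s,u),v)) z)) t"
  proof (rule push_reindex[symmetric])
    show "bij (\<lambda>(s::cu2,(u::cu2,v::cu2)). ((s,u),v))"
      by (rule bij_betw_byWitness[where f'="\<lambda>((s,u),v). (s,(u,v))"]) auto
  qed
  also have "\<dots> = push (\<lambda>z. Option.bind (?psiR z) M2) ?FGH' t"
  proof -
    have e1: "(\<lambda>z. Option.bind (?psiL ((\<lambda>(s,(u,v)). ((s,u),v)) z)) M2) = (\<lambda>z. Option.bind (?psiR z) M2)"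
    proof
      fix z :: "cu2 \<times> cu2 \<times> cu2"
      obtain s u v where z: "z = (s,(u,v))" by (cases z) auto
      show "Option.bind (?psiL ((\<lambda>(s,(u,v)). ((s,u),v)) z)) M2 = Option.bind (?psiR z) M2"
        unfolding z by (simp add: bind_map_pair bind_map_pair2 M2_def cu2_assoc)
    qed
    have e2: "(\<lambda>z. ?FGH ((\<lambda>(s,(u,v)). ((s,u),v)) z)) = ?FGH'"
    proof
      fix z :: "cu2 \<times> cu2 \<times> cu2"
      obtain s u v where z: "z = (s,(u,v))" by (cases z) auto
      show "?FGH ((\<lambda>(s,(u,v)). ((s,u),v)) z) = ?FGH' z"
        unfolding z by (simp add: mult.assoc)
    qed
    show ?thesis unfolding e1 e2 ..
  qed
  also have "\<dots> = conv f (conv g h) t"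
    unfolding conv_push[of f "conv g h"] eR by (rule push_comp[OF FGH', symmetric])
  finally show "conv (conv f g) h t = conv f (conv g h) t" .
qed

lemma mult_e_right: "cu2_mult s cu2_e = Some s"
  by (cases s) (auto simp: cu2_mult_def cu2_e_def)

lemma delta_summable: "delta a summable_on UNIV"
proof -
  have "delta a summable_on {a}" by simp
  moreover have "delta a summable_on UNIV \<longleftrightarrow> delta a summable_on {a}"
    by (rule summable_on_cong_neutral) (auto simp: delta_def)
  ultimately show ?thesis by blast
qed

lemma nrm_delta: "nrm (delta a) = 1"
  unfolding nrm_def by (subst infsum_single_UNIV[of a]) (auto simp: delta_def)

lemma nrm_nonneg: "nrm F \<ge> 0"
  unfolding nrm_def by (rule infsum_nonneg) simp

lemma nrm_cmult: "nrm (\<lambda>t. k * F t) = norm k * nrm F"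
  unfolding nrm_def norm_mult by (rule infsum_cmult_right')

lemma single_le_nrm:
  fixes F :: "'a \<Rightarrow> complex"
  assumes "F summable_on UNIV"
  shows "norm (F t) \<le> nrm F"
proof -
  have n: "(\<lambda>s. norm (F s)) summable_on UNIV" using summable_norm_iff[THEN iffD1, OF assms] .
  have "norm (F t) = infsum (\<lambda>s. norm (F s)) {t}" by simp
  also have "\<dots> \<le> nrm F" unfolding nrm_def
    by (rule infsum_mono_neutral) (use n in auto)
  finally show ?thesis .
qed

lemma push_Some_conv_e: "conv f (delta cu2_e) = f"
  unfolding conv_delta_right mult_e_right by (rule push_Some)

lemma geom_summable:
  assumes "K \<ge> 0"
  shows "(\<lambda>n. (1/2::real)^n / K) summable_on UNIV"
proof -
  have "summable (\<lambda>n. (1/2::real)^n / K)"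
    by (intro summable_divide summable_geometric) simp
  then show ?thesis by (rule summable_nonneg_imp_summable_on) (use assms in simp)
qed

lemma left_inverse:
  fixes r :: "cu2 \<Rightarrow> complex"
  assumes r: "r summable_on UNIV" and c: "c \<noteq> 0" and small: "nrm r \<le> norm c / 2"
  shows "\<exists>y. y summable_on UNIV \<and> conv y (\<lambda>t. c * delta cu2_e t + r t) = delta cu2_e"
proof -
  define \<rho> where "\<rho> = (\<lambda>t. (-1/c) * r t)"
  define x where "x = (\<lambda>t. c * delta cu2_e t + r t)"
  define a where "a = rec_nat (\<lambda>t. (1/c) * delta cu2_e t) (\<lambda>n an. conv an \<rho>)"
  have a0: "a 0 = (\<lambda>t. (1/c) * delta cu2_e t)" by (simp add: a_def)
  have aS: "a (Suc n) = conv (a n) \<rho>" for n by (simp add: a_def)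
  have nc: "norm c > 0" using c by simp
  have \<rho>s: "\<rho> summable_on UNIV" unfolding \<rho>_def by (rule summable_on_cmult_right[OF r])
  have \<rho>n: "nrm \<rho> \<le> 1/2"
  proof -
    have "nrm \<rho> = nrm r / norm c" unfolding \<rho>_def nrm_cmult by (simp add: norm_divide)
    also have "\<dots> \<le> 1/2" using small nc by (simp add: divide_le_eq)
    finally show ?thesis .
  qed
  have ds: "(\<lambda>t. k * delta cu2_e t) summable_on UNIV" for k
    by (rule summable_on_cmult_right[OF delta_summable])
  have xs: "x summable_on UNIV" unfolding x_def by (rule summable_on_add[OF ds r])
  have A1: "a n summable_on UNIV \<and> nrm (a n) \<le> (1/2)^n / norm c" for n
  proof (induction n)
    case 0
    have "nrm (a 0) = 1 / norm c" unfolding a0 nrm_cmult nrm_delta by (simp add: norm_divide)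
    then show ?case using ds[of "1/c"] by (simp add: a0)
  next
    case (Suc n)
    have s: "a (Suc n) summable_on UNIV" unfolding aS by (rule conv_summable(1)[OF conjunct1[OF Suc] \<rho>s])
    have "nrm (a (Suc n)) \<le> nrm (a n) * nrm \<rho>" unfolding aS by (rule conv_summable(2)[OF conjunct1[OF Suc] \<rho>s])
    also have "\<dots> \<le> ((1/2)^n / norm c) * (1/2)"
      by (rule mult_mono) (use Suc \<rho>n nrm_nonneg in auto)
    also have "\<dots> = (1/2)^(Suc n) / norm c" by simp
    finally show ?case using s by simp
  qed
  have as: "a n summable_on UNIV" for n using A1 by blast
  have an: "nrm (a n) \<le> (1/2)^n / norm c" for n using A1 by blast
  have geo: "(\<lambda>n. (1/2::real)^n / norm c) summable_on UNIV" by (rule geom_summable) simp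
  have nrma: "(\<lambda>n. nrm (a n)) summable_on UNIV"
    by (rule summable_on_comparison_test[OF geo]) (use an nrm_nonneg in auto)
  have D: "(\<lambda>(n,t). a n t) summable_on UNIV"
  proof -
    have "(\<lambda>z. norm ((\<lambda>(n,t). a n t) z)) summable_on Sigma UNIV (\<lambda>_. UNIV)"
      unfolding Infinite_Sum.abs_summable_on_Sigma_iff
    proof (intro conjI ballI)
      fix n :: nat
      show "(\<lambda>t. norm ((\<lambda>(n,t). a n t) (n,t))) summable_on UNIV"
        using summable_norm_iff[THEN iffD1, OF as[of n]] by simp
    next
      show "(\<lambda>n. norm (\<Sum>\<^sub>\<infinity>t. norm ((\<lambda>(n,t). a n t) (n,t)))) summable_on UNIV"
        using nrma by (simp add: nrm_def infsum_nonneg)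
    qed
    then have "(\<lambda>z. norm ((\<lambda>(n,t). a n t) z)) summable_on UNIV" by simp
    then show ?thesis using summable_norm_iff by (rule iffD2[rotated])
  qed
  define y where "y = (\<lambda>t. \<Sum>\<^sub>\<infinity>n. a n t)"
  have ys: "y summable_on UNIV"
  proof -
    have "(\<lambda>(t,n). a n t) summable_on UNIV \<times> UNIV"
      using summable_on_swap[of "\<lambda>(n,t). a n t" UNIV UNIV] D by (simp add: case_prod_beta)
    then show ?thesis
      unfolding y_def using summable_on_Sigma_banach[of "\<lambda>t n. a n t" UNIV "\<lambda>_. UNIV"] by simp
  qed
  have step: "conv (a n) x t = c * a n t - c * a (Suc n) t" for n t
  proof -
    have "conv (a n) x t = conv (a n) (\<lambda>t. c * delta cu2_e t) t + conv (a n) r t"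
      unfolding x_def by (rule conv_add_right[OF as ds r])
    also have "\<dots> = c * a n t + conv (a n) r t"
      by (simp add: conv_cmult_right push_Some_conv_e)
    also have "conv (a n) r t = - c * a (Suc n) t"
      unfolding aS \<rho>_def conv_cmult_right using c by simp
    finally show ?thesis by simp
  qed
  have "conv y x t = delta cu2_e t" for t
  proof -
    let ?K = "\<lambda>n z. if M2 z = Some t then a n (fst z) * x (snd z) else 0"
    have Q: "(\<lambda>(n,z). a n (fst z) * x (snd z)) summable_on UNIV"
    proof -
      have "(\<lambda>w. norm ((\<lambda>(n,z). a n (fst z) * x (snd z)) w)) summable_on Sigma UNIV (\<lambda>_. UNIV)"
        unfolding Infinite_Sum.abs_summable_on_Sigma_iff
      proof (intro conjI ballI)
        fix n :: nat
        show "(\<lambda>z. norm ((\<lambda>(n,z). a n (fst z) * x (snd z)) (n,z))) summable_on UNIV"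
          using summable_norm_iff[THEN iffD1, OF tensor_summable(1)[OF as[of n] xs]] by simp
      next
        have e: "norm (\<Sum>\<^sub>\<infinity>z. norm ((\<lambda>(n,z). a n (fst z) * x (snd z)) (n,z))) = nrm (a n) * nrm x" for n
          using tensor_summable(2)[OF as[of n] xs] by (simp add: nrm_def infsum_nonneg)
        show "(\<lambda>n. norm (\<Sum>\<^sub>\<infinity>z. norm ((\<lambda>(n,z). a n (fst z) * x (snd z)) (n,z)))) summable_on UNIV"
          unfolding e by (rule summable_on_cmult_left[OF nrma])
      qed
      then have "(\<lambda>w. norm ((\<lambda>(n,z). a n (fst z) * x (snd z)) w)) summable_on UNIV" by simp
      then show ?thesis using summable_norm_iff by (rule iffD2[rotated])
    qed
    have K: "(\<lambda>(n,z). ?K n z) summable_on UNIV"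
    proof -
      have "(\<lambda>w. norm ((\<lambda>(n,z). ?K n z) w)) summable_on UNIV"
        by (rule Infinite_Sum.abs_summable_on_comparison_test'[OF summable_norm_iff[THEN iffD1, OF Q]]) auto
      then show ?thesis using summable_norm_iff by (rule iffD2[rotated])
    qed
    have "conv y x t = (\<Sum>\<^sub>\<infinity>z. \<Sum>\<^sub>\<infinity>n. ?K n z)"
      unfolding conv_push push_def
    proof (rule infsum_cong)
      fix z
      show "(if M2 z = Some t then y (fst z) * x (snd z) else 0) = (\<Sum>\<^sub>\<infinity>n. ?K n z)"
        by (cases "M2 z = Some t") (simp_all add: y_def infsum_cmult_left')
    qed
    also have "\<dots> = (\<Sum>\<^sub>\<infinity>n. \<Sum>\<^sub>\<infinity>z. ?K n z)"
      by (rule infsum_swap_banach[symmetric]) (use K in simp)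
    also have "\<dots> = (\<Sum>\<^sub>\<infinity>n. c * a n t - c * a (Suc n) t)"
      by (rule infsum_cong) (simp add: step[symmetric] conv_push push_def)
    also have "\<dots> = c * a 0 t"
    proof -
      have sm: "(\<lambda>n. \<Sum>\<^sub>\<infinity>z. ?K n z) summable_on UNIV"
        using summable_on_Sigma_banach[of ?K UNIV "\<lambda>_. UNIV"] K by simp
      have sm': "(\<lambda>n. c * a n t - c * a (Suc n) t) summable_on UNIV"
      proof -
        have "(\<lambda>n. \<Sum>\<^sub>\<infinity>z. ?K n z) = (\<lambda>n. c * a n t - c * a (Suc n) t)"
          by (rule ext) (simp add: step[symmetric] conv_push push_def)
        then show ?thesis using sm by simp
      qed
      have lim: "(\<lambda>n. c * a n t) \<longlonglongrightarrow> 0"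
      proof -
        have "(\<lambda>n. a n t) \<longlonglongrightarrow> 0"
        proof (rule Lim_null_comparison)
          show "\<forall>\<^sub>F n in sequentially. norm (a n t) \<le> (1/2)^n / norm c"
            using single_le_nrm[OF as] an order_trans by (intro always_eventually allI) blast
          show "(\<lambda>n. (1/2::real)^n / norm c) \<longlonglongrightarrow> 0"
            by (intro tendsto_divide_zero LIMSEQ_power_zero) simp
        qed
        then show ?thesis using tendsto_mult_right_zero by blast
      qed
      have "(\<lambda>n. c * a n t - c * a (Suc n) t) sums (c * a 0 t - 0)"
        by (rule telescope_sums'[OF lim])
      moreover have "(\<lambda>n. c * a n t - c * a (Suc n) t) sums (\<Sum>\<^sub>\<infinity>n. c * a n t - c * a (Suc n) t)"
        by (rule has_sum_imp_sums) (use sm' in simp)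
      ultimately show ?thesis using sums_unique2 by fastforce
    qed
    also have "\<dots> = delta cu2_e t" using c by (simp add: a0)
    finally show ?thesis .
  qed
  then show ?thesis using ys unfolding x_def by blast
qed

definition U :: "(nat \<Rightarrow> gen) \<Rightarrow> nat \<Rightarrow> word" where
  "U n L = prefix_word n L @ replicate L G1 @ [G2]"

definition Phi :: "(nat \<Rightarrow> gen) \<Rightarrow> nat \<Rightarrow> cu2 \<Rightarrow> cu2 option" where
  "Phi n L s = Option.bind (cu2_mult ([], U n L) s) (\<lambda>p. cu2_mult p (U n L, []))"

lemma len_U: "length (U n L) = 2 * L + 1"
  by (simp add: U_def prefix_word_def)

lemma U_last: "U n L ! (length (U n L) - 1) = G2"
  by (simp add: U_def nth_append prefix_word_def)

lemma U_mid:
  assumes "1 \<le> d" "d \<le> L"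
  shows "U n L ! (length (U n L) - 1 - d) = G1"
proof -
  have i: "length (U n L) - 1 - d = length (prefix_word n L) + (L - d)"
    using assms len_U[of n L] by (simp add: prefix_word_def)
  have "U n L ! (length (prefix_word n L) + (L - d)) = (replicate L G1 @ [G2]) ! (L - d)"
    unfolding U_def by (rule nth_append_length_plus)
  also have "\<dots> = G1" using assms by (simp add: nth_append)
  finally show ?thesis using i by simp
qed

lemma mult1:
  assumes "length i < length u"
  shows "cu2_mult ([],u) (i,j) = (if \<exists>u'. u = i @ u' then Some ([], j @ drop (length i) u) else None)"
  using assms by (auto simp: cu2_mult_def)

lemma mult2:
  "cu2_mult ([],v) (u,[]) = (if \<exists>k'. u = v @ k' then Some (drop (length v) u, [])
     else if \<exists>j'. v = u @ j' then Some ([], drop (length u) v) else None)"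
  by (simp add: cu2_mult_def)

lemma caseA:
  assumes u1: "U n L = i @ u'" and u2: "U n L = j @ u' @ k'" and k: "k' \<noteq> []" and iL: "length i \<le> L"
  shows False
proof -
  let ?u = "U n L"
  define d where "d = length k'"
  have lu: "length ?u = 2*L+1" by (rule len_U)
  have d1: "1 \<le> d" using k by (simp add: d_def Suc_le_eq)
  have l1: "length ?u = length i + length u'" using u1 by simp
  have l2: "length ?u = length j + length u' + d" using u2 by (simp add: d_def)
  have li: "length i = length j + d" using l1 l2 by simp
  have dL: "d \<le> L" using li iL by simp
  have lu': "length u' \<ge> 1" using l1 lu iL by simp
  have e1: "?u ! (length ?u - 1) = u' ! (length u' - 1)"
  proof -
    have i: "length ?u - 1 = length i + (length u' - 1)" using u1 lu' by simp
    have "?u ! (length i + (length u' - 1)) = u' ! (length u' - 1)"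
      unfolding u1 by (rule nth_append_length_plus)
    then show ?thesis using i by simp
  qed
  have e2: "?u ! (length ?u - 1 - d) = u' ! (length u' - 1)"
  proof -
    have "length ?u - 1 - d = length j + (length u' - 1)" using u2 lu' by (simp add: d_def)
    moreover have "length u' - 1 < length u'" using lu' by simp
    moreover have "?u ! (length j + (length u' - 1)) = (u' @ k') ! (length u' - 1)"
      unfolding u2 by (rule nth_append_length_plus)
    ultimately show ?thesis by (simp add: nth_append)
  qed
  show False using e1 e2 U_last[of n L] U_mid[OF d1 dL, of n] by simp
qed

lemma caseB:
  assumes u1: "U n L = i @ u'" and v: "j @ u' = U n L @ j'" and jn: "j' \<noteq> []" and jL: "length j \<le> L"
  shows False
proof -
  let ?u = "U n L"
  define d where "d = length j'"
  have lu: "length ?u = 2*L+1" by (rule len_U)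
  have d1: "1 \<le> d" using jn by (simp add: d_def Suc_le_eq)
  have lj: "length j = length i + d"
  proof -
    have "length (j @ u') = length (?u @ j')" using v by simp
    then have "length j + length u' = length ?u + d" by (simp add: d_def)
    moreover have "length ?u = length i + length u'" using u1 by simp
    ultimately show ?thesis by simp
  qed
  have dL: "d \<le> L" using lj jL by simp
  have e1: "(j @ u') ! (length ?u - 1) = ?u ! (length ?u - 1)"
    unfolding v using lu by (simp add: nth_append)
  have e2: "(j @ u') ! (length ?u - 1) = ?u ! (length ?u - 1 - d)"
  proof -
    have g: "length ?u - 1 \<ge> length j" using lu jL by simp
    have "(j @ u') ! (length ?u - 1) = u' ! (length ?u - 1 - length j)"
      using g by (simp add: nth_append)
    also have "\<dots> = ?u ! (length i + (length ?u - 1 - length j))"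
      unfolding u1 by (rule nth_append_length_plus[symmetric])
    also have "length i + (length ?u - 1 - length j) = length ?u - 1 - d" using g lj by simp
    finally show ?thesis .
  qed
  show False using e1 e2 U_last[of n L] U_mid[OF d1 dL, of n] by simp
qed

lemma take_U: "l \<le> L \<Longrightarrow> take l (U n L) = prefix_word n l"
  by (simp add: U_def prefix_word_def take_map)

lemma Phi_e:
  assumes "length i \<le> L" "length j \<le> L" "Phi n L (i,j) = Some t"
  shows "t = cu2_e"
proof -
  let ?u = "U n L"
  have lt: "length i < length ?u" using assms(1) len_U[of n L] by simp
  from assms(3) obtain u' where u1: "?u = i @ u'"
    and t: "cu2_mult ([], j @ u') (?u, []) = Some t"
    unfolding Phi_def mult1[OF lt] by (auto split: if_splits)
  show ?thesis
  proof (cases "\<exists>k'. ?u = (j @ u') @ k'")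
    case True
    then obtain k' where k': "?u = (j @ u') @ k'" by blast
    have "k' = []" using caseA[OF u1 _ _ assms(1), of j k'] k' by auto
    then show ?thesis using t k' by (simp add: mult2 cu2_e_def)
  next
    case False
    then obtain j' where j': "j @ u' = ?u @ j'" using t by (simp add: mult2 split: if_splits)
    have "j' = []" using caseB[OF u1 j' _ assms(2)] by auto
    then show ?thesis using t j' False by (simp add: mult2 cu2_e_def)
  qed
qed

lemma Phi_e_iff:
  assumes "length i \<le> L" "length j \<le> L"
  shows "Phi n L (i,j) = Some cu2_e \<longleftrightarrow> (i = j \<and> i = prefix_word n (length i))"
proof
  let ?u = "U n L"
  have lt: "length i < length ?u" using assms(1) len_U[of n L] by simp
  assume h: "Phi n L (i,j) = Some cu2_e"
  from h obtain u' where u1: "?u = i @ u'"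
    and t: "cu2_mult ([], j @ u') (?u, []) = Some cu2_e"
    unfolding Phi_def mult1[OF lt] by (auto split: if_splits)
  have "j @ u' = ?u" using t by (auto simp: mult2 cu2_e_def split: if_splits)
  then have ij: "i = j" using u1 by simp
  have "take (length i) ?u = i" using u1 by simp
  then have "i = prefix_word n (length i)" using take_U[OF assms(1), of n] by simp
  then show "i = j \<and> i = prefix_word n (length i)" using ij by simp
next
  let ?u = "U n L"
  have lt: "length i < length ?u" using assms(1) len_U[of n L] by simp
  assume h: "i = j \<and> i = prefix_word n (length i)"
  have ti: "take (length i) ?u = i"
    using take_U[OF assms(1), of n] conjunct2[OF h, symmetric] by simp
  then have u1: "?u = i @ drop (length i) ?u" by (metis append_take_drop_id)
  then have "cu2_mult ([],?u) (i,j) = Some ([], ?u)" unfolding mult1[OF lt] using h by auto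
  then show "Phi n L (i,j) = Some cu2_e" unfolding Phi_def by (simp add: mult2 cu2_e_def)
qed

lemma in_A_iff: "in_A f \<longleftrightarrow> f summable_on UNIV"
  unfolding in_A_def using summable_norm_iff by (rule sym)

lemma len_pw [simp]: "length (prefix_word n l) = l"
  by (simp add: prefix_word_def)

lemma inj_pw: "inj (\<lambda>l. (prefix_word n l, prefix_word n l))"
proof (rule injI)
  fix a b assume "(prefix_word n a, prefix_word n a) = (prefix_word n b, prefix_word n b)"
  then have "length (prefix_word n a) = length (prefix_word n b)" by simp
  then show "a = b" by simp
qed

lemma tail_small:
  fixes f :: "cu2 \<Rightarrow> complex"
  assumes f: "f summable_on UNIV" and e: "\<epsilon> > 0"
  shows "\<exists>M. \<forall>L\<ge>M. (\<Sum>\<^sub>\<infinity>s\<in>UNIV - {s. length (fst s) \<le> L \<and> length (snd s) \<le> L}. norm (f s)) \<le> \<epsilon>"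
proof -
  have nf: "(\<lambda>s. norm (f s)) summable_on UNIV" using summable_norm_iff[THEN iffD1, OF f] .
  obtain F where F: "finite F" "F \<subseteq> UNIV" and d: "dist (sum (\<lambda>s. norm (f s)) F) (infsum (\<lambda>s. norm (f s)) UNIV) \<le> \<epsilon>"
    using infsum_finite_approximation[OF nf e] by blast
  have split: "infsum (\<lambda>s. norm (f s)) UNIV = infsum (\<lambda>s. norm (f s)) F + infsum (\<lambda>s. norm (f s)) (UNIV - F)"
  proof -
    have "infsum (\<lambda>s. norm (f s)) (F \<union> (UNIV - F)) = infsum (\<lambda>s. norm (f s)) F + infsum (\<lambda>s. norm (f s)) (UNIV - F)"
      by (rule infsum_Un_disjoint) (use F in \<open>auto intro: summable_on_subset_banach[OF nf]\<close>)
    then show ?thesis by simp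
  qed
  have tailF: "infsum (\<lambda>s. norm (f s)) (UNIV - F) \<le> \<epsilon>"
    using d split F by (simp add: dist_real_def)
  define M where "M = Max (insert 0 ((\<lambda>s. max (length (fst s)) (length (snd s))) ` F))"
  have "\<forall>L\<ge>M. (\<Sum>\<^sub>\<infinity>s\<in>UNIV - {s. length (fst s) \<le> L \<and> length (snd s) \<le> L}. norm (f s)) \<le> \<epsilon>"
  proof (intro allI impI)
    fix L assume LM: "L \<ge> M"
    have sub: "UNIV - {s. length (fst s) \<le> L \<and> length (snd s) \<le> L} \<subseteq> UNIV - F"
    proof
      fix s :: cu2 assume s: "s \<in> UNIV - {s. length (fst s) \<le> L \<and> length (snd s) \<le> L}"
      show "s \<in> UNIV - F"
      proof
        show "s \<notin> F"
        proof
          assume sF: "s \<in> F"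
          have "max (length (fst s)) (length (snd s)) \<le> M"
            unfolding M_def using F sF by (intro Max_ge) auto
          then show False using s LM by auto
        qed
      qed simp
    qed
    have "(\<Sum>\<^sub>\<infinity>s\<in>UNIV - {s. length (fst s) \<le> L \<and> length (snd s) \<le> L}. norm (f s)) \<le> infsum (\<lambda>s. norm (f s)) (UNIV - F)"
      by (rule infsum_mono_neutral) (use sub in \<open>auto intro: summable_on_subset_banach[OF nf]\<close>)
    then show "(\<Sum>\<^sub>\<infinity>s\<in>UNIV - {s. length (fst s) \<le> L \<and> length (snd s) \<le> L}. norm (f s)) \<le> \<epsilon>"
      using tailF by simp
  qed
  then show ?thesis by blast
qed

lemma if_summable:
  fixes F :: "'a \<Rightarrow> complex"
  assumes "F summable_on UNIV"
  shows "(\<lambda>s. if P s then F s else 0) summable_on UNIV"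
proof -
  have "(\<lambda>s. norm (if P s then F s else 0)) summable_on UNIV"
    by (rule Infinite_Sum.abs_summable_on_comparison_test'[OF summable_norm_iff[THEN iffD1, OF assms]]) auto
  then show ?thesis using summable_norm_iff by (rule iffD2[rotated])
qed

lemma conj_decomp:
  fixes f :: "cu2 \<Rightarrow> complex"
  assumes f: "f summable_on UNIV"
  shows "conv (conv (delta ([], U n L)) f) (delta (U n L, [])) t =
         (\<Sum>l\<le>L. f (prefix_word n l, prefix_word n l)) * delta cu2_e t
         + push (Phi n L) (\<lambda>s. if length (fst s) \<le> L \<and> length (snd s) \<le> L then 0 else f s) t"
proof -
  define P where "P = (\<lambda>s::cu2. length (fst s) \<le> L \<and> length (snd s) \<le> L)"
  define fF where "fF = (\<lambda>s. if P s then f s else 0)"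
  define fT where "fT = (\<lambda>s. if P s then 0 else f s)"
  define Ds where "Ds = (\<lambda>l. (prefix_word n l, prefix_word n l)) ` {..L}"
  have fFs: "fF summable_on UNIV" unfolding fF_def by (rule if_summable[OF f])
  have fTs: "fT summable_on UNIV"
  proof -
    have "(\<lambda>s. if \<not> P s then f s else 0) summable_on UNIV" by (rule if_summable[OF f])
    moreover have "(\<lambda>s. if P s then 0 else f s) = (\<lambda>s. if \<not> P s then f s else 0)" by auto
    ultimately show ?thesis unfolding fT_def by simp
  qed
  have "conv (conv (delta ([], U n L)) f) (delta (U n L, [])) t = push (Phi n L) f t"
    unfolding conv_delta_right conv_delta_left push_comp[OF f] Phi_def ..
  also have "\<dots> = push (Phi n L) (\<lambda>s. fF s + fT s) t"
    by (rule arg_cong[where f="\<lambda>F. push (Phi n L) F t"]) (simp add: fF_def fT_def fun_eq_iff)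
  also have "\<dots> = push (Phi n L) fF t + push (Phi n L) fT t"
    by (rule push_add[OF fFs fTs])
  also have "push (Phi n L) fF t = (\<Sum>l\<le>L. f (prefix_word n l, prefix_word n l)) * delta cu2_e t"
  proof -
    have pt: "(if Phi n L s = Some t then fF s else 0) = (if s \<in> Ds \<and> t = cu2_e then f s else 0)" for s
    proof (cases "P s")
      case False
      have "s \<notin> Ds" using False by (auto simp: Ds_def P_def)
      then show ?thesis using False by (simp add: fF_def)
    next
      case True
      obtain i j where s: "s = (i,j)" by (cases s)
      have iL: "length i \<le> L" and jL: "length j \<le> L" using True s by (auto simp: P_def)
      have DsI: "s \<in> Ds \<longleftrightarrow> Phi n L (i,j) = Some cu2_e"
      proof
        assume "s \<in> Ds"
        then obtain l where "l \<le> L" "s = (prefix_word n l, prefix_word n l)" by (auto simp: Ds_def)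
        then have il: "i = prefix_word n l" "j = prefix_word n l" using s by auto
        have "i = j \<and> i = prefix_word n (length i)" unfolding il by simp
        then show "Phi n L (i,j) = Some cu2_e" using Phi_e_iff[OF iL jL, of n] by (rule iffD2[rotated])
      next
        assume "Phi n L (i,j) = Some cu2_e"
        then have "i = j \<and> i = prefix_word n (length i)" by (rule iffD1[OF Phi_e_iff[OF iL jL]])
        then show "s \<in> Ds" using s iL unfolding Ds_def by (auto intro!: image_eqI[of _ _ "length i"])
      qed
      show ?thesis
      proof (cases "Phi n L (i,j) = Some t")
        case True
        then have "t = cu2_e" by (rule Phi_e[OF iL jL])
        then show ?thesis using True DsI s \<open>P s\<close> by (simp add: fF_def)
      next
        case False
        then show ?thesis using DsI s by auto
      qed
    qed
    have "push (Phi n L) fF t = (\<Sum>\<^sub>\<infinity>s. if s \<in> Ds \<and> t = cu2_e then f s else 0)"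
      unfolding push_def using pt by simp
    also have "\<dots> = (\<Sum>\<^sub>\<infinity>s\<in>Ds. if t = cu2_e then f s else 0)"
      by (rule infsum_cong_neutral) auto
    also have "\<dots> = (\<Sum>s\<in>Ds. if t = cu2_e then f s else 0)"
      by (rule infsum_finite) (simp add: Ds_def)
    also have "\<dots> = (\<Sum>l\<le>L. if t = cu2_e then f (prefix_word n l, prefix_word n l) else 0)"
      unfolding Ds_def by (subst sum.reindex) (auto intro: inj_on_subset[OF inj_pw])
    also have "\<dots> = (\<Sum>l\<le>L. f (prefix_word n l, prefix_word n l)) * delta cu2_e t"
      by (simp add: delta_def)
    finally show ?thesis .
  qed
  finally show ?thesis unfolding fT_def P_def .
qed

theorem proposition3p6:
  fixes f :: "cu2 \<Rightarrow> complex"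
  assumes "in_A f"
    and "\<exists>n :: nat \<Rightarrow> gen. (\<Sum>l. f (prefix_word n l, prefix_word n l)) \<noteq> 0"
  shows "\<exists>g h. in_A g \<and> in_A h \<and> (g #\<^sub>C f) #\<^sub>C h = delta cu2_e"
proof -
  have f: "f summable_on UNIV" using assms(1) in_A_iff by blast
  obtain n :: "nat \<Rightarrow> gen" where c0: "(\<Sum>l. f (prefix_word n l, prefix_word n l)) \<noteq> 0"
    using assms(2) by blast
  define D where "D = (\<lambda>l. f (prefix_word n l, prefix_word n l))"
  define c where "c = suminf D"
  have c: "c \<noteq> 0" using c0 by (simp add: c_def D_def)
  have nc: "norm c > 0" using c by simp
  have sD: "summable D"
  proof -
    have "f summable_on range (\<lambda>l. (prefix_word n l, prefix_word n l))"
      by (rule summable_on_subset_banach[OF f]) simp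
    then have "(f \<circ> (\<lambda>l. (prefix_word n l, prefix_word n l))) summable_on UNIV"
      using summable_on_reindex[OF inj_pw[of n], of f] by simp
    then show ?thesis unfolding D_def o_def by (rule summable_on_imp_summable)
  qed
  have lim: "(\<lambda>m. \<Sum>l<m. D l) \<longlonglongrightarrow> c" unfolding c_def by (rule summable_LIMSEQ[OF sD])
  obtain M1 where M1: "\<forall>m\<ge>M1. norm ((\<Sum>l<m. D l) - c) < norm c / 3"
    using lim nc unfolding LIMSEQ_iff by (metis divide_pos_pos zero_less_numeral)
  obtain M2 where M2: "\<forall>L\<ge>M2. (\<Sum>\<^sub>\<infinity>s\<in>UNIV - {s. length (fst s) \<le> L \<and> length (snd s) \<le> L}. norm (f s)) \<le> norm c / 3"
    using tail_small[OF f, of "norm c / 3"] nc by auto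
  define L where "L = max M1 M2"
  define cL where "cL = (\<Sum>l\<le>L. D l)"
  have cLe: "cL = (\<Sum>l<Suc L. D l)" unfolding cL_def by (simp only: lessThan_Suc_atMost)
  have "Suc L \<ge> M1" by (simp add: L_def)
  then have "norm (cL - c) < norm c / 3"
    using M1 unfolding cLe by blast
  moreover have "norm c \<le> norm cL + norm (cL - c)"
    using norm_triangle_ineq4[of cL "cL - c"] by simp
  ultimately have ncL: "norm cL > 2 * norm c / 3" by simp
  have cL0: "cL \<noteq> 0" using ncL nc by auto
  define fT where "fT = (\<lambda>s::cu2. if length (fst s) \<le> L \<and> length (snd s) \<le> L then 0 else f s)"
  define r where "r = push (Phi n L) fT"
  have fTs: "fT summable_on UNIV"
  proof -
    have "(\<lambda>s. if \<not> (length (fst s) \<le> L \<and> length (snd s) \<le> L) then f s else 0) summable_on UNIV"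
      by (rule if_summable[OF f])
    moreover have "fT = (\<lambda>s. if \<not> (length (fst s) \<le> L \<and> length (snd s) \<le> L) then f s else 0)"
      unfolding fT_def by auto
    ultimately show ?thesis by simp
  qed
  have rs: "r summable_on UNIV" unfolding r_def by (rule push_summable(1)[OF fTs])
  have "nrm r \<le> nrm fT" unfolding r_def by (rule push_summable(2)[OF fTs])
  also have "nrm fT = (\<Sum>\<^sub>\<infinity>s\<in>UNIV - {s. length (fst s) \<le> L \<and> length (snd s) \<le> L}. norm (f s))"
    unfolding nrm_def fT_def by (rule infsum_cong_neutral) auto
  also have "\<dots> \<le> norm c / 3" using M2 by (simp add: L_def)
  finally have rsmall: "nrm r \<le> norm cL / 2" using ncL by simp
  obtain y where ys: "y summable_on UNIV" and yinv: "conv y (\<lambda>t. cL * delta cu2_e t + r t) = delta cu2_e"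
    using left_inverse[OF rs cL0 rsmall] by blast
  define d1 where "d1 = delta ([], U n L)"
  define d2 where "d2 = delta (U n L, [])"
  have x: "conv (conv d1 f) d2 = (\<lambda>t. cL * delta cu2_e t + r t)"
  proof
    fix t
    show "conv (conv d1 f) d2 t = cL * delta cu2_e t + r t"
      unfolding d1_def d2_def conj_decomp[OF f] cL_def D_def r_def fT_def ..
  qed
  have d1s: "d1 summable_on UNIV" unfolding d1_def by (rule delta_summable)
  have d2s: "d2 summable_on UNIV" unfolding d2_def by (rule delta_summable)
  define g where "g = conv y d1"
  have gs: "g summable_on UNIV" unfolding g_def by (rule conv_summable(1)[OF ys d1s])
  have "conv (conv g f) d2 = conv (conv y (conv d1 f)) d2"
    unfolding g_def conv_assoc[OF ys d1s f] ..
  also have "\<dots> = conv y (conv (conv d1 f) d2)"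
    by (rule conv_assoc[OF ys conv_summable(1)[OF d1s f] d2s])
  also have "\<dots> = delta cu2_e" unfolding x by (rule yinv)
  finally have "conv (conv g f) d2 = delta cu2_e" .
  moreover have "in_A g" using gs in_A_iff by blast
  moreover have "in_A d2" using d2s in_A_iff by blast
  ultimately show ?thesis by blast
qed

end
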